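(* Let $d\ge2$ and $\overrightarrow{w}\in(0,\infty)^d$. For every random vector $\overrightarrow{U}=(U_1,\dots,U_d)$ with uniform$[0,1]$ marginals, $$l(\overrightarrow{w})\le\mathrm{Var}\left(\sum_{i=1}^dw_iU_i\right)\le\frac1{12}\left(\sum_{i=1}^dw_i\right)^2.$$ The lower bound is attained if and only if $\overrightarrow{U}$ is $\overrightarrow{w^*}$-CM, and the upper bound is attained if and only if $\overrightarrow{U}$ is comonotonic. In particular $\inf\{\mathrm{Var}(\sum_i w_iU_i)\}=l(\overrightarrow{w})$ over all such $\overrightarrow{U}$, and the infimum is attained.
   Context: A random vector $\overrightarrow{U}=(U_1,\dots,U_d)$ with each $U_i$ uniform on $[0,1]$ is $\overrightarrow{v}$-CM (for $\overrightarrow{v}\in(0,\infty)^d$) if $P\left(\sum_{i=1}^d v_iU_i=\frac12\sum_{i=1}^d v_i\right)=1$; it is comonotonic if $U_1=\cdots=U_d$ almost surely. For $\overrightarrow{w}\in(0,\infty)^d$, define $\overrightarrow{w^*}=(w_1^*,\dots,w_d^* )$ by $w_i^*=w_i$ if $2w_i\le\sum_{j=1}^dw_j$ and $w_i^*=\sum_{j=1}^dw_j-w_i$ if $2w_i>\sum_{j=1}^dw_j$; and define $l(\overrightarrow{w})=\frac1{12}\left[\left(2\max\{w_1,\dots,w_d\}-\sum_{i=1}^dw_i\right)_+\right]^2$, where $x_+=\max\{x,0\}$. *)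

theory Defs
  imports "HOL-Probability.Probability"
begin

text \<open>Vectors in (0,inf)^d are represented as functions nat => real, indices 0..d-1.
  A random vector is U :: nat => 'a => real on a probability space M.\<close>

definition wsum :: "nat \<Rightarrow> (nat \<Rightarrow> real) \<Rightarrow> real" where
  "wsum d w = (\<Sum>i<d. w i)"

definition wstar :: "nat \<Rightarrow> (nat \<Rightarrow> real) \<Rightarrow> nat \<Rightarrow> real" where
  "wstar d w i = (if 2 * w i \<le> wsum d w then w i else wsum d w - w i)"

definition lfun :: "nat \<Rightarrow> (nat \<Rightarrow> real) \<Rightarrow> real" where
  "lfun d w = (1/12) * (max (2 * Max (w ` {..<d}) - wsum d w) 0)^2"

definition unif_marginals :: "'a measure \<Rightarrow> nat \<Rightarrow> (nat \<Rightarrow> 'a \<Rightarrow> real) \<Rightarrow> bool" where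
  "unif_marginals M d U \<longleftrightarrow>
     (\<forall>i<d. U i \<in> borel_measurable M \<and>
            distr M lborel (U i) = uniform_measure lborel {0..1})"

definition is_CM :: "'a measure \<Rightarrow> nat \<Rightarrow> (nat \<Rightarrow> real) \<Rightarrow> (nat \<Rightarrow> 'a \<Rightarrow> real) \<Rightarrow> bool" where
  "is_CM M d v U \<longleftrightarrow>
     measure M {x \<in> space M. (\<Sum>i<d. v i * U i x) = (1/2) * (\<Sum>i<d. v i)} = 1"

definition comonotonic :: "'a measure \<Rightarrow> nat \<Rightarrow> (nat \<Rightarrow> 'a \<Rightarrow> real) \<Rightarrow> bool" where
  "comonotonic M d U \<longleftrightarrow> (AE x in M. \<forall>i<d. \<forall>j<d. U i x = U j x)"

definition var_sum :: "'a measure \<Rightarrow> nat \<Rightarrow> (nat \<Rightarrow> real) \<Rightarrow> (nat \<Rightarrow> 'a \<Rightarrow> real) \<Rightarrow> real" where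
  "var_sum M d w U = prob_space.variance M (\<lambda>x. \<Sum>i<d. w i * U i x)"

end

theory Submission
  imports Defs
begin


lemma unif_facts:
  assumes P: "prob_space M" and U: "unif_marginals M d U" and i: "i < d"
  shows "U i \<in> borel_measurable M"
    and "AE x in M. 0 \<le> U i x \<and> U i x \<le> 1"
    and "prob_space.expectation M (U i) = 1/2"
    and "prob_space.variance M (U i) = 1/12"
proof -
  interpret prob_space M by fact
  have m: "U i \<in> borel_measurable M" and D: "distr M lborel (U i) = uniform_measure lborel {0..1}"
    using U i unfolding unif_marginals_def by auto
  show "U i \<in> borel_measurable M" by fact
  have dist: "distributed M lborel (U i) (\<lambda>x. indicator {0..1::real} x / measure lborel {0..1::real})"
    unfolding distributed_def D uniform_measure_def using m by (auto intro!: arg_cong2[where f=density] ext split: split_indicator)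
  show "expectation (U i) = 1/2" using uniform_distributed_expectation[OF dist] by simp
  show "variance (U i) = 1/12" using uniform_distributed_variance[OF dist] by simp
  have "AE x in uniform_measure lborel {0..1::real}. 0 \<le> x \<and> x \<le> 1"
    by (rule AE_uniform_measureI) auto
  then have "AE x in distr M lborel (U i). 0 \<le> x \<and> x \<le> 1" unfolding D .
  then show "AE x in M. 0 \<le> U i x \<and> U i x \<le> 1"
    by (subst (asm) AE_distr_iff) (auto simp: m)
qed



context
  fixes M :: "'a measure" and d :: nat and U :: "nat \<Rightarrow> 'a \<Rightarrow> real"
  assumes P: "prob_space M" and UM: "unif_marginals M d U"
begin

lemma meas[measurable]: "i < d \<Longrightarrow> U i \<in> borel_measurable M"
  using unif_facts[OF P UM] by blast

lemma bnd: "AE x in M. \<forall>i<d. 0 \<le> U i x \<and> U i x \<le> 1"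
proof -
  have "AE x in M. \<forall>i\<in>{..<d}. 0 \<le> U i x \<and> U i x \<le> 1"
    by (rule eventually_ball_finite) (use unif_facts(2)[OF P UM] in auto)
  then show ?thesis by auto
qed

lemma intU: "i < d \<Longrightarrow> integrable M (U i)"
proof -
  interpret prob_space M by (rule P)
  assume i: "i < d"
  show ?thesis
    by (rule integrable_const_bound[where B=1]) (use bnd i in \<open>auto elim!: eventually_mono\<close>)
qed

lemma intV: "i < d \<Longrightarrow> integrable M (\<lambda>x. U i x - 1/2)"
proof -
  interpret prob_space M by (rule P)
  assume i: "i < d"
  show ?thesis by (intro Bochner_Integration.integrable_diff intU[OF i]) simp
qed

lemma intUU: "i < d \<Longrightarrow> j < d \<Longrightarrow> integrable M (\<lambda>x. (U i x - 1/2) * (U j x - 1/2))"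
proof -
  interpret prob_space M by (rule P)
  assume i: "i < d" and j: "j < d"
  show ?thesis
  proof (rule integrable_const_bound[where B=1])
    show "AE x in M. norm ((U i x - 1/2) * (U j x - 1/2)) \<le> 1"
      using bnd
    proof (rule eventually_mono)
      fix x assume "\<forall>i<d. 0 \<le> U i x \<and> U i x \<le> 1"
      then have "\<bar>U i x - 1/2\<bar> \<le> 1" "\<bar>U j x - 1/2\<bar> \<le> 1" using i j by auto
      then show "norm ((U i x - 1/2) * (U j x - 1/2)) \<le> 1"
        by (simp add: abs_mult) (metis abs_ge_zero mult_le_one)
    qed
  qed (use i j in simp)
qed

definition C :: "nat \<Rightarrow> nat \<Rightarrow> real" where
  "C i j = integral\<^sup>L M (\<lambda>x. (U i x - 1/2) * (U j x - 1/2))"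

lemma EV: "i < d \<Longrightarrow> integral\<^sup>L M (\<lambda>x. U i x - 1/2) = 0"
proof -
  interpret prob_space M by (rule P)
  assume i: "i < d"
  show ?thesis using unif_facts(3)[OF P UM i] intU[OF i] by (simp add: prob_space)
qed

lemma Cii: "i < d \<Longrightarrow> C i i = 1/12"
proof -
  interpret prob_space M by (rule P)
  assume i: "i < d"
  show ?thesis using unif_facts(4)[OF P UM i] unfolding unif_facts(3)[OF P UM i]
    by (simp add: C_def power2_eq_square)
qed

lemma Csym: "C i j = C j i"
  unfolding C_def by (simp add: mult.commute)

lemma bilin:
  "integral\<^sup>L M (\<lambda>x. (\<Sum>i<d. a i * (U i x - 1/2)) * (\<Sum>j<d. b j * (U j x - 1/2)))
     = (\<Sum>i<d. \<Sum>j<d. a i * b j * C i j)"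
proof -
  have eq: "(\<lambda>x. (\<Sum>i<d. a i * (U i x - 1/2)) * (\<Sum>j<d. b j * (U j x - 1/2)))
      = (\<lambda>x. \<Sum>i<d. \<Sum>j<d. a i * b j * ((U i x - 1/2) * (U j x - 1/2)))"
    by (simp add: sum_product algebra_simps)
  have I: "\<And>i j. i < d \<Longrightarrow> j < d \<Longrightarrow> integrable M (\<lambda>x. a i * b j * ((U i x - 1/2) * (U j x - 1/2)))"
    by (intro integrable_mult_right intUU)
  have I2: "\<And>i. i < d \<Longrightarrow> integrable M (\<lambda>x. \<Sum>j<d. a i * b j * ((U i x - 1/2) * (U j x - 1/2)))"
    by (rule Bochner_Integration.integrable_sum, rule I) auto
  have "integral\<^sup>L M (\<lambda>x. \<Sum>i<d. \<Sum>j<d. a i * b j * ((U i x - 1/2) * (U j x - 1/2)))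
     = (\<Sum>i<d. integral\<^sup>L M (\<lambda>x. \<Sum>j<d. a i * b j * ((U i x - 1/2) * (U j x - 1/2))))"
    by (rule Bochner_Integration.integral_sum[where f="\<lambda>i x. \<Sum>j<d. a i * b j * ((U i x - 1/2) * (U j x - 1/2))"]) (simp add: I2)
  also have "\<dots> = (\<Sum>i<d. \<Sum>j<d. integral\<^sup>L M (\<lambda>x. a i * b j * ((U i x - 1/2) * (U j x - 1/2))))"
    by (intro sum.cong refl Bochner_Integration.integral_sum) (simp add: intUU)
  finally show ?thesis unfolding eq C_def by simp
qed

lemma intbil:
  "integrable M (\<lambda>x. (\<Sum>i<d. a i * (U i x - 1/2)) * (\<Sum>j<d. b j * (U j x - 1/2)))"
proof -
  have eq: "(\<lambda>x. (\<Sum>i<d. a i * (U i x - 1/2)) * (\<Sum>j<d. b j * (U j x - 1/2)))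
      = (\<lambda>x. \<Sum>i<d. \<Sum>j<d. a i * b j * ((U i x - 1/2) * (U j x - 1/2)))"
    by (simp add: sum_product algebra_simps)
  have I: "\<And>i j. i < d \<Longrightarrow> j < d \<Longrightarrow> integrable M (\<lambda>x. a i * b j * ((U i x - 1/2) * (U j x - 1/2)))"
    by (intro integrable_mult_right intUU)
  show ?thesis unfolding eq
    by (rule Bochner_Integration.integrable_sum, rule Bochner_Integration.integrable_sum, rule I) auto
qed

lemma lin:
  "integral\<^sup>L M (\<lambda>x. (\<Sum>i<d. a i * (U i x - 1/2))) = 0"
proof -
  have "integral\<^sup>L M (\<lambda>x. (\<Sum>i<d. a i * (U i x - 1/2))) = (\<Sum>i<d. integral\<^sup>L M (\<lambda>x. a i * (U i x - 1/2)))"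
    by (rule Bochner_Integration.integral_sum[where f="\<lambda>i x. a i * (U i x - 1/2)"]) (simp add: intV)
  also have "\<dots> = 0" using EV by simp
  finally show ?thesis .
qed

lemma Cbound: "i < d \<Longrightarrow> j < d \<Longrightarrow> \<bar>C i j\<bar> \<le> 1/12"
proof -
  assume i: "i < d" and j: "j < d"
  have "0 \<le> integral\<^sup>L M (\<lambda>x. ((U i x - 1/2) + (U j x - 1/2))^2)"
    by simp
  also have "\<dots> = integral\<^sup>L M (\<lambda>x. ((U i x - 1/2) * (U i x - 1/2) + (U j x - 1/2) * (U j x - 1/2)) + 2 * ((U i x - 1/2) * (U j x - 1/2)))"
    by (rule Bochner_Integration.integral_cong) (simp_all add: power2_eq_square algebra_simps)
  also have "\<dots> = C i i + C j j + 2 * C i j"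
    unfolding C_def using intUU[OF i i] intUU[OF j j] intUU[OF i j]
    by (simp add: Bochner_Integration.integral_add)
  finally have 1: "0 \<le> C i i + C j j + 2 * C i j" .
  have "0 \<le> integral\<^sup>L M (\<lambda>x. ((U i x - 1/2) - (U j x - 1/2))^2)"
    by simp
  also have "\<dots> = integral\<^sup>L M (\<lambda>x. ((U i x - 1/2) * (U i x - 1/2) + (U j x - 1/2) * (U j x - 1/2)) - 2 * ((U i x - 1/2) * (U j x - 1/2)))"
    by (rule Bochner_Integration.integral_cong) (simp_all add: power2_eq_square algebra_simps)
  also have "\<dots> = C i i + C j j - 2 * C i j"
    unfolding C_def using intUU[OF i i] intUU[OF j j] intUU[OF i j]
    by (simp add: Bochner_Integration.integral_add Bochner_Integration.integral_diff)
  finally have 2: "0 \<le> C i i + C j j - 2 * C i j" .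
  show ?thesis using 1 2 Cii[OF i] Cii[OF j] by linarith
qed

lemma intlin: "integrable M (\<lambda>x. (\<Sum>i<d. a i * (U i x - 1/2)))"
  by (rule Bochner_Integration.integrable_sum) (simp add: intV)

lemma sq_zero_iff:
  "integral\<^sup>L M (\<lambda>x. (\<Sum>i<d. a i * (U i x - 1/2))^2) = 0 \<longleftrightarrow>
   (AE x in M. (\<Sum>i<d. a i * (U i x - 1/2)) = 0)"
proof -
  have "integrable M (\<lambda>x. (\<Sum>i<d. a i * (U i x - 1/2))^2)"
    using intbil[of a a] by (simp add: power2_eq_square)
  then show ?thesis
    by (subst integral_nonneg_eq_0_iff_AE) auto
qed

lemma sq_eq: "integral\<^sup>L M (\<lambda>x. (\<Sum>i<d. a i * (U i x - 1/2))^2) = (\<Sum>i<d. \<Sum>j<d. a i * a j * C i j)"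
  using bilin[of a a] by (simp add: power2_eq_square)

lemma var_int: "var_sum M d a U = integral\<^sup>L M (\<lambda>x. (\<Sum>i<d. a i * (U i x - 1/2))^2)"
proof -
  have pw: "\<And>x. (\<Sum>i<d. a i * U i x) = (\<Sum>i<d. a i * (U i x - 1/2)) + (\<Sum>i<d. a i) / 2"
    by (simp add: algebra_simps sum.distrib sum_divide_distrib sum_subtractf)
  have "integral\<^sup>L M (\<lambda>x. \<Sum>i<d. a i * U i x) = integral\<^sup>L M (\<lambda>x. (\<Sum>i<d. a i * (U i x - 1/2)) + (\<Sum>i<d. a i) / 2)"
    unfolding pw ..
  also have "\<dots> = (\<Sum>i<d. a i) / 2"
  proof -
    interpret prob_space M by (rule P)
    show ?thesis using intlin[of a] lin[of a] prob_space
      by (simp add: Bochner_Integration.integral_add)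
  qed
  finally have E: "integral\<^sup>L M (\<lambda>x. \<Sum>i<d. a i * U i x) = (\<Sum>i<d. a i) / 2" .
  show ?thesis unfolding var_sum_def E by (simp add: pw)
qed

lemma measlin[measurable]: "(\<lambda>x. \<Sum>i<d. a i * (U i x - 1/2)) \<in> borel_measurable M"
  by (rule borel_measurable_sum) (simp add: meas)

lemma sqdiff:
  assumes i: "i < d" and j: "j < d"
  shows "integral\<^sup>L M (\<lambda>x. ((U i x - 1/2) - (U j x - 1/2))^2) = C i i + C j j - 2 * C i j"
    and "integrable M (\<lambda>x. ((U i x - 1/2) - (U j x - 1/2))^2)"
proof -
  have eq: "(\<lambda>x. ((U i x - 1/2) - (U j x - 1/2))^2) = (\<lambda>x. ((U i x - 1/2) * (U i x - 1/2) + (U j x - 1/2) * (U j x - 1/2)) - 2 * ((U i x - 1/2) * (U j x - 1/2)))"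
    by (rule ext) (simp add: power2_eq_square algebra_simps)
  show "integral\<^sup>L M (\<lambda>x. ((U i x - 1/2) - (U j x - 1/2))^2) = C i i + C j j - 2 * C i j"
    unfolding eq C_def using intUU[OF i i] intUU[OF j j] intUU[OF i j]
    by (simp add: Bochner_Integration.integral_add Bochner_Integration.integral_diff)
  show "integrable M (\<lambda>x. ((U i x - 1/2) - (U j x - 1/2))^2)"
    unfolding eq using intUU[OF i i] intUU[OF j j] intUU[OF i j] by simp
qed

lemma upper:
  assumes pos: "\<forall>i<d. w i > 0" and d0: "0 < d"
  shows "var_sum M d w U \<le> 1/12 * (\<Sum>i<d. w i)^2"
    and "var_sum M d w U = 1/12 * (\<Sum>i<d. w i)^2 \<longleftrightarrow> comonotonic M d U"
proof -
  have Q: "var_sum M d w U = (\<Sum>i<d. \<Sum>j<d. w i * w j * C i j)"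
    unfolding var_int sq_eq ..
  have T: "1/12 * (\<Sum>i<d. w i)^2 = (\<Sum>i<d. \<Sum>j<d. w i * w j * (1/12))"
    by (simp add: power2_eq_square sum_product sum_distrib_left sum_distrib_right algebra_simps)
  have tm: "\<And>i j. i < d \<Longrightarrow> j < d \<Longrightarrow> w i * w j * C i j \<le> w i * w j * (1/12)"
  proof -
    fix i j assume i: "i < d" and j: "j < d"
    have "C i j \<le> 1/12" using Cbound[OF i j] by linarith
    moreover have "0 \<le> w i * w j" using pos i j by (simp add: less_imp_le)
    ultimately show "w i * w j * C i j \<le> w i * w j * (1/12)" by (rule mult_left_mono)
  qed
  show "var_sum M d w U \<le> 1/12 * (\<Sum>i<d. w i)^2"
    unfolding Q T by (intro sum_mono) (rule tm; simp)
  show "var_sum M d w U = 1/12 * (\<Sum>i<d. w i)^2 \<longleftrightarrow> comonotonic M d U"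
  proof
    assume eq: "var_sum M d w U = 1/12 * (\<Sum>i<d. w i)^2"
    have "(\<Sum>i<d. \<Sum>j<d. w i * w j * (1/12) - w i * w j * C i j) = 0"
      using eq unfolding Q T by (simp add: sum_subtractf)
    moreover have tm': "\<And>i j. i \<in> {..<d} \<Longrightarrow> j \<in> {..<d} \<Longrightarrow> 0 \<le> w i * w j * (1/12) - w i * w j * C i j"
    proof -
      fix i j assume "i \<in> {..<d}" "j \<in> {..<d}"
      then have "i < d" "j < d" by auto
      from tm[OF this] show "0 \<le> w i * w j * (1/12) - w i * w j * C i j" by simp
    qed
    have "\<And>i. i \<in> {..<d} \<Longrightarrow> 0 \<le> (\<Sum>j<d. w i * w j * (1/12) - w i * w j * C i j)"
      by (rule sum_nonneg) (rule tm')
    then have "(\<Sum>i<d. \<Sum>j<d. w i * w j * (1/12) - w i * w j * C i j) = 0 \<longleftrightarrow>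
       (\<forall>i\<in>{..<d}. (\<Sum>j<d. w i * w j * (1/12) - w i * w j * C i j) = 0)"
      by (intro sum_nonneg_eq_0_iff) auto
    ultimately have z0: "\<forall>i\<in>{..<d}. (\<Sum>j<d. w i * w j * (1/12) - w i * w j * C i j) = 0"
      by blast
    have z: "\<And>i j. i < d \<Longrightarrow> j < d \<Longrightarrow> w i * w j * (1/12) - w i * w j * C i j = 0"
    proof -
      fix i j assume i: "i < d" and j: "j < d"
      have "(\<Sum>j<d. w i * w j * (1/12) - w i * w j * C i j) = 0" using z0 i by simp
      moreover have "(\<Sum>j<d. w i * w j * (1/12) - w i * w j * C i j) = 0 \<longleftrightarrow>
          (\<forall>j\<in>{..<d}. w i * w j * (1/12) - w i * w j * C i j = 0)"
        by (intro sum_nonneg_eq_0_iff) (use tm' i in auto)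
      ultimately have "\<forall>j\<in>{..<d}. w i * w j * (1/12) - w i * w j * C i j = 0"
        by blast
      then show "w i * w j * (1/12) - w i * w j * C i j = 0" by (rule bspec) (use j in simp)
    qed
    have Cij: "\<And>i j. i < d \<Longrightarrow> j < d \<Longrightarrow> C i j = 1/12"
    proof -
      fix i j assume i: "i < d" and j: "j < d"
      have h1: "w i * w j * (1/12 - C i j) = 0" using z[OF i j] by (simp add: algebra_simps)
      have "w i > 0" "w j > 0" using pos i j by auto
      then have "w i * w j \<noteq> 0" by simp
      with h1 show "C i j = 1/12" by simp
    qed
    have ae: "\<And>i j. i < d \<Longrightarrow> j < d \<Longrightarrow> AE x in M. U i x = U j x"
    proof -
      fix i j assume i: "i < d" and j: "j < d"
      have "integral\<^sup>L M (\<lambda>x. ((U i x - 1/2) - (U j x - 1/2))^2) = 0"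
        using sqdiff(1)[OF i j] Cij[OF i i] Cij[OF j j] Cij[OF i j] by simp
      then have "AE x in M. ((U i x - 1/2) - (U j x - 1/2))^2 = 0"
        using sqdiff(2)[OF i j] by (subst (asm) integral_nonneg_eq_0_iff_AE) auto
      then show "AE x in M. U i x = U j x" by (rule eventually_mono) simp
    qed
    have "AE x in M. \<forall>i\<in>{..<d}. \<forall>j\<in>{..<d}. U i x = U j x"
      by (intro eventually_ball_finite finite_lessThan ballI ae) auto
    then show "comonotonic M d U" unfolding comonotonic_def
      by (rule eventually_mono) (simp only: Ball_def lessThan_iff)
  next
    assume "comonotonic M d U"
    then have ae: "AE x in M. (\<Sum>i<d. w i * (U i x - 1/2)) = (\<Sum>i<d. w i) * (U 0 x - 1/2)"
      unfolding comonotonic_def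
    proof (rule eventually_mono)
      fix x assume h: "\<forall>i<d. \<forall>j<d. U i x = U j x"
      have hh: "\<And>i. i \<in> {..<d} \<Longrightarrow> w i * (U i x - 1/2) = w i * (U 0 x - 1/2)"
      proof -
        fix i assume "i \<in> {..<d}"
        then have "U i x = U 0 x" using h d0 by blast
        then show "w i * (U i x - 1/2) = w i * (U 0 x - 1/2)" by simp
      qed
      show "(\<Sum>i<d. w i * (U i x - 1/2)) = (\<Sum>i<d. w i) * (U 0 x - 1/2)"
        unfolding sum_distrib_right by (rule sum.cong[OF refl hh])
    qed
    have "var_sum M d w U = integral\<^sup>L M (\<lambda>x. ((\<Sum>i<d. w i) * (U 0 x - 1/2))^2)"
      unfolding var_int
    proof (rule integral_cong_AE)
      show "(\<lambda>x. (\<Sum>i<d. w i * (U i x - 1/2))^2) \<in> borel_measurable M" by measurable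
      show "(\<lambda>x. ((\<Sum>i<d. w i) * (U 0 x - 1/2))^2) \<in> borel_measurable M"
        using meas[OF d0] by measurable
      show "AE x in M. (\<Sum>i<d. w i * (U i x - 1/2))^2 = ((\<Sum>i<d. w i) * (U 0 x - 1/2))^2"
        using ae by (rule eventually_mono) simp
    qed
    also have "\<dots> = integral\<^sup>L M (\<lambda>x. (\<Sum>i<d. w i)^2 * ((U 0 x - 1/2) * (U 0 x - 1/2)))"
      by (rule Bochner_Integration.integral_cong) (simp_all add: power2_eq_square algebra_simps)
    also have "\<dots> = (\<Sum>i<d. w i)^2 * C 0 0"
      unfolding C_def by (rule integral_mult_right_zero)
    finally show "var_sum M d w U = 1/12 * (\<Sum>i<d. w i)^2" using Cii[OF d0] by simp
  qed
qed

lemma CM_iff: "is_CM M d a U \<longleftrightarrow> (AE x in M. (\<Sum>i<d. a i * (U i x - 1/2)) = 0)"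
proof -
  interpret prob_space M by (rule P)
  have f[measurable]: "(\<lambda>x. \<Sum>i<d. a i * U i x) \<in> borel_measurable M"
    by (rule borel_measurable_sum) (simp add: meas)
  have S: "{x \<in> space M. (\<Sum>i<d. a i * U i x) = (1/2) * (\<Sum>i<d. a i)} \<in> sets M"
    by measurable
  have pw0: "\<And>x. (\<Sum>i<d. a i * (U i x - 1/2)) = (\<Sum>i<d. a i * U i x) - (1/2) * (\<Sum>i<d. a i)"
    by (simp add: right_diff_distrib sum_subtractf sum_distrib_left mult.commute)
  have pw: "\<And>x. (\<Sum>i<d. a i * U i x) = (1/2) * (\<Sum>i<d. a i) \<longleftrightarrow> (\<Sum>i<d. a i * (U i x - 1/2)) = 0"
    by (subst pw0) (rule eq_iff_diff_eq_0)
  have "is_CM M d a U \<longleftrightarrow> (AE x in M. x \<in> {x \<in> space M. (\<Sum>i<d. a i * U i x) = (1/2) * (\<Sum>i<d. a i)})"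
    unfolding is_CM_def using prob_eq_1[OF S] by simp
  also have "\<dots> \<longleftrightarrow> (AE x in M. (\<Sum>i<d. a i * U i x) = (1/2) * (\<Sum>i<d. a i))"
  proof
    assume "AE x in M. x \<in> {x \<in> space M. (\<Sum>i<d. a i * U i x) = (1/2) * (\<Sum>i<d. a i)}"
    then show "AE x in M. (\<Sum>i<d. a i * U i x) = (1/2) * (\<Sum>i<d. a i)"
      by (rule eventually_mono) simp
  next
    assume "AE x in M. (\<Sum>i<d. a i * U i x) = (1/2) * (\<Sum>i<d. a i)"
    with AE_space show "AE x in M. x \<in> {x \<in> space M. (\<Sum>i<d. a i * U i x) = (1/2) * (\<Sum>i<d. a i)}"
      by eventually_elim simp
  qed
  also have "\<dots> \<longleftrightarrow> (AE x in M. (\<Sum>i<d. a i * (U i x - 1/2)) = 0)"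
    unfolding pw ..
  finally show ?thesis .
qed

lemma lower:
  assumes pos: "\<forall>i<d. w i > 0" and d2: "2 \<le> d"
  shows "lfun d w \<le> var_sum M d w U"
    and "var_sum M d w U = lfun d w \<longleftrightarrow> is_CM M d (wstar d w) U"
proof -
  define s where "s = (\<Sum>i<d. w i)"
  have "0 \<in> {..<d}" using d2 by simp
  then have fin: "finite (w ` {..<d})" "w ` {..<d} \<noteq> {}" by auto
  obtain m where m: "m < d" and wm: "w m = Max (w ` {..<d})"
    using Max_in[OF fin] by auto
  have le: "\<And>i. i < d \<Longrightarrow> w i \<le> w m"
    unfolding wm using fin by (intro Max_ge) auto
  define D where "D = max (2 * w m - s) 0"
  have D0: "0 \<le> D" unfolding D_def by simp
  have lf: "lfun d w = D^2 / 12"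
    unfolding lfun_def wsum_def wm[symmetric] D_def s_def by simp
  have two: "\<And>i. i < d \<Longrightarrow> i \<noteq> m \<Longrightarrow> w i + w m \<le> s"
  proof -
    fix i assume i: "i < d" and im: "i \<noteq> m"
    have "(\<Sum>k\<in>{i,m}. w k) \<le> (\<Sum>k\<in>{..<d}. w k)"
      by (rule sum_mono2) (use i m pos in \<open>auto simp: less_imp_le\<close>)
    then show "w i + w m \<le> s" using im unfolding s_def by simp
  qed
  define ws where "ws = wstar d w"
  have ws: "\<And>i. i < d \<Longrightarrow> ws i = w i - (if i = m then D else 0)"
  proof -
    fix i assume i: "i < d"
    show "ws i = w i - (if i = m then D else 0)"
    proof (cases "i = m")
      case True
      then show ?thesis unfolding ws_def wstar_def wsum_def D_def s_def[symmetric] by auto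
    next
      case False
      have "2 * w i \<le> s" using two[OF i False] le[OF i] by linarith
      then show ?thesis using False unfolding ws_def wstar_def wsum_def s_def[symmetric] by auto
    qed
  qed
  have pw: "\<And>x. (\<Sum>i<d. w i * (U i x - 1/2)) = D * (U m x - 1/2) + (\<Sum>i<d. ws i * (U i x - 1/2))"
  proof -
    fix x
    have "(\<Sum>i<d. ws i * (U i x - 1/2)) = (\<Sum>i<d. w i * (U i x - 1/2) - (if i = m then D * (U i x - 1/2) else 0))"
      by (rule sum.cong) (auto simp: ws algebra_simps)
    also have "\<dots> = (\<Sum>i<d. w i * (U i x - 1/2)) - D * (U m x - 1/2)"
      by (simp add: sum_subtractf m)
    finally show "(\<Sum>i<d. w i * (U i x - 1/2)) = D * (U m x - 1/2) + (\<Sum>i<d. ws i * (U i x - 1/2))"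
      by simp
  qed
  have sws: "(\<Sum>i<d. ws i) = s - D"
  proof -
    have "(\<Sum>i<d. ws i) = (\<Sum>i<d. w i - (if i = m then D else 0))"
      by (rule sum.cong) (auto simp: ws)
    also have "\<dots> = s - D" by (simp add: sum_subtractf m s_def)
    finally show ?thesis .
  qed
  define Z where "Z x = (\<Sum>i<d. ws i * (U i x - 1/2))" for x
  have IZ: "integrable M (\<lambda>x. (Z x)^2)"
    using intbil[of ws ws] unfolding Z_def by (simp add: power2_eq_square)
  have pwVZ: "\<And>x. (U m x - 1/2) * Z x = (\<Sum>j<d. ws j * ((U m x - 1/2) * (U j x - 1/2)))"
    unfolding Z_def by (simp add: sum_distrib_left algebra_simps)
  have IVZ: "integrable M (\<lambda>x. (U m x - 1/2) * Z x)"
    unfolding pwVZ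
    by (rule Bochner_Integration.integrable_sum, rule integrable_mult_right, rule intUU) (use m in auto)
  have E1: "integral\<^sup>L M (\<lambda>x. (U m x - 1/2) * Z x) = (\<Sum>j<d. ws j * C m j)"
    unfolding pwVZ C_def
    by (subst Bochner_Integration.integral_sum) (use m intUU in auto)
  have E1pos: "0 \<le> D * integral\<^sup>L M (\<lambda>x. (U m x - 1/2) * Z x)"
  proof (cases "D = 0")
    case True then show ?thesis by simp
  next
    case False
    then have Dv: "D = 2 * w m - s" unfolding D_def by (auto simp: max_def split: if_splits)
    have "(\<Sum>j<d. - ws j / 12 + (if j = m then ws j / 6 else 0)) \<le> (\<Sum>j<d. ws j * C m j)"
    proof (rule sum_mono)
      fix j assume j: "j \<in> {..<d}"
      show "- ws j / 12 + (if j = m then ws j / 6 else 0) \<le> ws j * C m j"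
      proof (cases "j = m")
        case True then show ?thesis using Cii[OF m] by (simp add: field_simps)
      next
        case False
        have "ws j = w j" using ws j False by simp
        then have wj: "0 \<le> ws j" using pos j by (simp add: less_imp_le)
        have "- (1/12) \<le> C m j" using Cbound[OF m, of j] j by (simp add: abs_le_iff)
        then have "ws j * (- (1/12)) \<le> ws j * C m j" by (rule mult_left_mono) (rule wj)
        then show ?thesis using False by simp
      qed
    qed
    also have "(\<Sum>j<d. - ws j / 12 + (if j = m then ws j / 6 else 0)) = - (\<Sum>j<d. ws j) / 12 + ws m / 6"
      by (simp add: sum_subtractf sum_divide_distrib m)
    also have "\<dots> = 0" using sws ws[OF m] Dv by (simp add: field_simps)
    finally show ?thesis using D0 E1 by simp
  qed
  have var: "var_sum M d w U = D^2 / 12 + 2 * D * integral\<^sup>L M (\<lambda>x. (U m x - 1/2) * Z x) + integral\<^sup>L M (\<lambda>x. (Z x)^2)"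
  proof -
    have "var_sum M d w U = integral\<^sup>L M (\<lambda>x. (D^2 * ((U m x - 1/2) * (U m x - 1/2)) + 2 * D * ((U m x - 1/2) * Z x)) + (Z x)^2)"
      unfolding var_int
    proof (rule Bochner_Integration.integral_cong)
      fix x
      have "(\<Sum>i<d. w i * (U i x - 1/2))^2 = (D * (U m x - 1/2) + Z x)^2"
        by (simp only: pw Z_def)
      also have "\<dots> = (D^2 * ((U m x - 1/2) * (U m x - 1/2)) + 2 * D * ((U m x - 1/2) * Z x)) + (Z x)^2"
        by (simp add: power2_eq_square algebra_simps)
      finally show "(\<Sum>i<d. w i * (U i x - 1/2))^2 = (D^2 * ((U m x - 1/2) * (U m x - 1/2)) + 2 * D * ((U m x - 1/2) * Z x)) + (Z x)^2" .
    qed simp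
    also have "\<dots> = D^2 * C m m + 2 * D * integral\<^sup>L M (\<lambda>x. (U m x - 1/2) * Z x) + integral\<^sup>L M (\<lambda>x. (Z x)^2)"
      unfolding C_def using intUU[OF m m] IZ IVZ by (simp add: Bochner_Integration.integral_add)
    finally show ?thesis using Cii[OF m] by simp
  qed
  have E2pos: "0 \<le> integral\<^sup>L M (\<lambda>x. (Z x)^2)" by simp
  show "lfun d w \<le> var_sum M d w U"
    unfolding var lf using E1pos E2pos by simp
  have E2iff: "integral\<^sup>L M (\<lambda>x. (Z x)^2) = 0 \<longleftrightarrow> is_CM M d ws U"
    unfolding CM_iff Z_def by (rule sq_zero_iff)
  show "var_sum M d w U = lfun d w \<longleftrightarrow> is_CM M d (wstar d w) U"
    unfolding ws_def[symmetric] E2iff[symmetric]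
  proof
    assume h: "var_sum M d w U = lfun d w"
    then have "D^2 / 12 + 2 * D * integral\<^sup>L M (\<lambda>x. (U m x - 1/2) * Z x) + integral\<^sup>L M (\<lambda>x. (Z x)^2) = D^2 / 12"
      unfolding var lf .
    then show "integral\<^sup>L M (\<lambda>x. (Z x)^2) = 0" using E1pos E2pos by linarith
  next
    assume z: "integral\<^sup>L M (\<lambda>x. (Z x)^2) = 0"
    then have "AE x in M. Z x = 0" using E2iff unfolding CM_iff Z_def by simp
    then have "integral\<^sup>L M (\<lambda>x. (U m x - 1/2) * Z x) = integral\<^sup>L M (\<lambda>x. 0)"
      using IVZ by (intro integral_cong_AE) (auto elim!: eventually_mono)
    then show "var_sum M d w U = lfun d w" unfolding var lf using z by simp
  qed
qed

end


lemma affine_piece: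
  fixes h :: "real \<Rightarrow> ennreal" and f :: "real \<Rightarrow> real"
  assumes h[measurable]: "h \<in> borel_measurable borel" and k: "k \<noteq> 0"
    and I: "\<And>t. (c + k * t \<in> {l..r}) \<longleftrightarrow> t \<in> {\<alpha>..\<beta>}"
    and F: "\<And>t. t \<in> {\<alpha>..<\<beta>} \<Longrightarrow> f t = c + k * t"
  shows "(\<integral>\<^sup>+ t. indicator {\<alpha>..<\<beta>} t * h (f t) \<partial>lborel)
       = ennreal (1 / \<bar>k\<bar>) * (\<integral>\<^sup>+ u. indicator {l..r} u * h u \<partial>lborel)"
proof -
  have "(\<integral>\<^sup>+ u. indicator {l..r} u * h u \<partial>lborel)
      = ennreal \<bar>k\<bar> * (\<integral>\<^sup>+ t. indicator {l..r} (c + k * t) * h (c + k * t) \<partial>lborel)"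
    by (rule nn_integral_real_affine[OF _ k]) simp
  also have "(\<integral>\<^sup>+ t. indicator {l..r} (c + k * t) * h (c + k * t) \<partial>lborel)
      = (\<integral>\<^sup>+ t. indicator {\<alpha>..<\<beta>} t * h (f t) \<partial>lborel)"
  proof (rule nn_integral_cong_AE)
    show "AE t in lborel. indicator {l..r} (c + k * t) * h (c + k * t) = indicator {\<alpha>..<\<beta>} t * h (f t)"
      using AE_lborel_singleton[of \<beta>]
    proof (rule eventually_mono)
      fix t :: real assume tb: "t \<noteq> \<beta>"
      show "indicator {l..r} (c + k * t) * h (c + k * t) = indicator {\<alpha>..<\<beta>} t * h (f t)"
      proof (cases "t \<in> {\<alpha>..<\<beta>}")
        case True
        then have "c + k * t \<in> {l..r}" using I by auto
        then show ?thesis using True F[OF True] by simp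
      next
        case False
        then have "c + k * t \<notin> {l..r}" using I tb by auto
        then show ?thesis using False by simp
      qed
    qed
  qed
  finally have e: "(\<integral>\<^sup>+ u. indicator {l..r} u * h u \<partial>lborel)
      = ennreal \<bar>k\<bar> * (\<integral>\<^sup>+ t. indicator {\<alpha>..<\<beta>} t * h (f t) \<partial>lborel)" .
  have "ennreal (1 / \<bar>k\<bar>) * ennreal \<bar>k\<bar> = 1"
    using k by (simp add: ennreal_mult''[symmetric])
  then show ?thesis unfolding e by (simp add: mult.assoc[symmetric])
qed

lemma piece_inc:
  fixes h :: "real \<Rightarrow> ennreal" and f :: "real \<Rightarrow> real"
  assumes h[measurable]: "h \<in> borel_measurable borel" and q: "0 \<le> q" and lr: "0 < q \<Longrightarrow> l < r"
    and F: "\<And>t. t \<in> {\<alpha>..<\<alpha>+q} \<Longrightarrow> f t = l + (r - l) * (t - \<alpha>) / q"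
  shows "(\<integral>\<^sup>+ t. indicator {\<alpha>..<\<alpha>+q} t * h (f t) \<partial>lborel)
       = ennreal (q / (r - l)) * (\<integral>\<^sup>+ u. indicator {l..r} u * h u \<partial>lborel)"
proof (cases "q = 0")
  case True then show ?thesis by simp
next
  case False
  then have q0: "0 < q" using q by simp
  have lr: "l < r" using lr q0 .
  define k where "k = (r - l) / q"
  have k0: "0 < k" unfolding k_def using q0 lr by simp
  have kq: "k * q = r - l" unfolding k_def using q0 by simp
  have "(\<integral>\<^sup>+ t. indicator {\<alpha>..<\<alpha>+q} t * h (f t) \<partial>lborel)
       = ennreal (1 / \<bar>k\<bar>) * (\<integral>\<^sup>+ u. indicator {l..r} u * h u \<partial>lborel)"
  proof (rule affine_piece[where c="l - k * \<alpha>"])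
    show "k \<noteq> 0" using k0 by simp
    fix t
    have e: "l - k * \<alpha> + k * t = l + k * (t - \<alpha>)" by (simp add: algebra_simps)
    have 1: "l \<le> l + k * (t - \<alpha>) \<longleftrightarrow> \<alpha> \<le> t"
      using k0 by (simp add: zero_le_mult_iff)
    have 2: "l + k * (t - \<alpha>) \<le> r \<longleftrightarrow> t \<le> \<alpha> + q"
    proof -
      have "l + k * (t - \<alpha>) \<le> r \<longleftrightarrow> k * (t - \<alpha>) \<le> k * q" using kq by linarith
      also have "\<dots> \<longleftrightarrow> t - \<alpha> \<le> q" using k0 by simp
      finally show ?thesis by linarith
    qed
    show "(l - k * \<alpha> + k * t \<in> {l..r}) = (t \<in> {\<alpha>..\<alpha> + q})"
      unfolding e using 1 2 by auto
  next
    fix t assume "t \<in> {\<alpha>..<\<alpha>+q}"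
    then have "f t = l + (r - l) * (t - \<alpha>) / q" by (rule F)
    moreover have "(r - l) * (t - \<alpha>) / q = (r - l) / q * t - (r - l) / q * \<alpha>"
      using q0 by (simp add: field_simps)
    ultimately show "f t = l - k * \<alpha> + k * t" unfolding k_def by linarith
  qed (rule h)
  also have "1 / \<bar>k\<bar> = q / (r - l)" using k0 q0 lr unfolding k_def by simp
  finally show ?thesis .
qed

lemma piece_dec:
  fixes h :: "real \<Rightarrow> ennreal" and f :: "real \<Rightarrow> real"
  assumes h[measurable]: "h \<in> borel_measurable borel" and q: "0 \<le> q" and lr: "0 < q \<Longrightarrow> l < r"
    and F: "\<And>t. t \<in> {\<alpha>..<\<alpha>+q} \<Longrightarrow> f t = r - (r - l) * (t - \<alpha>) / q"
  shows "(\<integral>\<^sup>+ t. indicator {\<alpha>..<\<alpha>+q} t * h (f t) \<partial>lborel)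
       = ennreal (q / (r - l)) * (\<integral>\<^sup>+ u. indicator {l..r} u * h u \<partial>lborel)"
proof (cases "q = 0")
  case True then show ?thesis by simp
next
  case False
  then have q0: "0 < q" using q by simp
  have lr: "l < r" using lr q0 .
  define k where "k = (r - l) / q"
  have k0: "0 < k" unfolding k_def using q0 lr by simp
  have kq: "k * q = r - l" unfolding k_def using q0 by simp
  have "(\<integral>\<^sup>+ t. indicator {\<alpha>..<\<alpha>+q} t * h (f t) \<partial>lborel)
       = ennreal (1 / \<bar>-k\<bar>) * (\<integral>\<^sup>+ u. indicator {l..r} u * h u \<partial>lborel)"
  proof (rule affine_piece[where c="r + k * \<alpha>"])
    show "-k \<noteq> 0" using k0 by simp
    fix t
    have e: "r + k * \<alpha> + -k * t = r - k * (t - \<alpha>)" by (simp add: algebra_simps)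
    have 1: "r - k * (t - \<alpha>) \<le> r \<longleftrightarrow> \<alpha> \<le> t"
      using k0 by (simp add: zero_le_mult_iff)
    have 2: "l \<le> r - k * (t - \<alpha>) \<longleftrightarrow> t \<le> \<alpha> + q"
    proof -
      have "l \<le> r - k * (t - \<alpha>) \<longleftrightarrow> k * (t - \<alpha>) \<le> k * q" using kq by linarith
      also have "\<dots> \<longleftrightarrow> t - \<alpha> \<le> q" using k0 by simp
      finally show ?thesis by linarith
    qed
    show "(r + k * \<alpha> + -k * t \<in> {l..r}) = (t \<in> {\<alpha>..\<alpha> + q})"
      unfolding e using 1 2 by auto
  next
    fix t assume "t \<in> {\<alpha>..<\<alpha>+q}"
    then have "f t = r - (r - l) * (t - \<alpha>) / q" by (rule F)
    moreover have "(r - l) * (t - \<alpha>) / q = (r - l) / q * t - (r - l) / q * \<alpha>"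
      using q0 by (simp add: field_simps)
    ultimately show "f t = r + k * \<alpha> + -k * t" unfolding k_def by linarith
  qed (rule h)
  also have "1 / \<bar>-k\<bar> = q / (r - l)" using k0 q0 lr unfolding k_def by simp
  finally show ?thesis .
qed

lemma distr3:
  fixes G :: "real \<Rightarrow> real"
  assumes G[measurable]: "G \<in> borel_measurable borel"
    and q: "0 \<le> q1" "0 \<le> q2" "0 \<le> q3" "q1 + q2 + q3 = 1"
    and c: "0 \<le> c1" "0 \<le> c2" "0 \<le> c3"
    and I[measurable]: "I1 \<in> sets borel" "I2 \<in> sets borel" "I3 \<in> sets borel"
    and P1: "\<And>h. h \<in> borel_measurable borel \<Longrightarrow> (\<integral>\<^sup>+ t. indicator {0..<q1} t * h (G t) \<partial>lborel) = ennreal c1 * (\<integral>\<^sup>+ u. indicator I1 u * h u \<partial>lborel)"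
    and P2: "\<And>h. h \<in> borel_measurable borel \<Longrightarrow> (\<integral>\<^sup>+ t. indicator {q1..<q1+q2} t * h (G t) \<partial>lborel) = ennreal c2 * (\<integral>\<^sup>+ u. indicator I2 u * h u \<partial>lborel)"
    and P3: "\<And>h. h \<in> borel_measurable borel \<Longrightarrow> (\<integral>\<^sup>+ t. indicator {q1+q2..<q1+q2+q3} t * h (G t) \<partial>lborel) = ennreal c3 * (\<integral>\<^sup>+ u. indicator I3 u * h u \<partial>lborel)"
    and dens: "AE u in lborel. c1 * indicator I1 u + c2 * indicator I2 u + c3 * indicator I3 u = (indicator {0..1} u :: real)"
  shows "distr (uniform_measure lborel {0..1}) lborel G = uniform_measure lborel {0..1}"
proof (rule measure_eqI)
  show "sets (distr (uniform_measure lborel {0..1}) lborel G) = sets (uniform_measure lborel {0..1::real})"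
    by simp
  fix A assume "A \<in> sets (distr (uniform_measure lborel {0..1}) lborel G)"
  then have A[measurable]: "A \<in> sets borel" by simp
  have Gm: "G \<in> measurable (uniform_measure lborel {0..1}) lborel"
    by (simp add: measurable_def) (use G in \<open>simp add: measurable_def\<close>)
  have "emeasure (distr (uniform_measure lborel {0..1}) lborel G) A
      = (\<integral>\<^sup>+ x. indicator A x \<partial>distr (uniform_measure lborel {0..1}) lborel G)"
    using A by simp
  also have "\<dots> = (\<integral>\<^sup>+ t. indicator A (G t) \<partial>uniform_measure lborel {0..1})"
    by (rule nn_integral_distr[OF Gm]) simp
  also have "\<dots> = (\<integral>\<^sup>+ t. indicator A (G t) * indicator {0..1} t \<partial>lborel)"
    by (subst nn_integral_uniform_measure) (auto simp: divide_ennreal_def)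
  also have "\<dots> = (\<integral>\<^sup>+ t. indicator {0..<q1} t * indicator A (G t) + indicator {q1..<q1+q2} t * indicator A (G t)
        + indicator {q1+q2..<q1+q2+q3} t * indicator A (G t) \<partial>lborel)"
  proof (rule nn_integral_cong_AE)
    show "AE t in lborel. indicator A (G t) * indicator {0..1} t = indicator {0..<q1} t * indicator A (G t) + indicator {q1..<q1+q2} t * indicator A (G t)
        + indicator {q1+q2..<q1+q2+q3} t * (indicator A (G t) :: ennreal)"
      using AE_lborel_singleton[of 1]
    proof (rule eventually_mono)
      fix t :: real assume t1: "t \<noteq> 1"
      show "indicator A (G t) * indicator {0..1} t = indicator {0..<q1} t * indicator A (G t) + indicator {q1..<q1+q2} t * indicator A (G t)
        + indicator {q1+q2..<q1+q2+q3} t * (indicator A (G t) :: ennreal)"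
        using q t1 by (auto split: split_indicator)
    qed
  qed
  also have "\<dots> = ennreal c1 * (\<integral>\<^sup>+ u. indicator I1 u * indicator A u \<partial>lborel)
     + ennreal c2 * (\<integral>\<^sup>+ u. indicator I2 u * indicator A u \<partial>lborel)
     + ennreal c3 * (\<integral>\<^sup>+ u. indicator I3 u * indicator A u \<partial>lborel)"
  proof -
    have p1: "(\<integral>\<^sup>+ t. indicator {0..<q1} t * indicator A (G t) \<partial>lborel) = ennreal c1 * (\<integral>\<^sup>+ u. indicator I1 u * indicator A u \<partial>lborel)"
      by (rule P1) simp
    have p2: "(\<integral>\<^sup>+ t. indicator {q1..<q1+q2} t * indicator A (G t) \<partial>lborel) = ennreal c2 * (\<integral>\<^sup>+ u. indicator I2 u * indicator A u \<partial>lborel)"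
      by (rule P2) simp
    have p3: "(\<integral>\<^sup>+ t. indicator {q1+q2..<q1+q2+q3} t * indicator A (G t) \<partial>lborel) = ennreal c3 * (\<integral>\<^sup>+ u. indicator I3 u * indicator A u \<partial>lborel)"
      by (rule P3) simp
    show ?thesis
      by (subst nn_integral_add, measurable, measurable, subst nn_integral_add, measurable, measurable)
         (simp only: p1 p2 p3)
  qed
  also have "\<dots> = (\<integral>\<^sup>+ u. ennreal c1 * (indicator I1 u * indicator A u) + ennreal c2 * (indicator I2 u * indicator A u)
      + ennreal c3 * (indicator I3 u * indicator A u) \<partial>lborel)"
  proof -
    let ?f1 = "\<lambda>u. ennreal c1 * (indicator I1 u * indicator A u)"
    let ?f2 = "\<lambda>u. ennreal c2 * (indicator I2 u * indicator A u)"
    let ?f3 = "\<lambda>u. ennreal c3 * (indicator I3 u * indicator A u)"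
    have m: "?f1 \<in> borel_measurable lborel" "?f2 \<in> borel_measurable lborel" "?f3 \<in> borel_measurable lborel"
      "(\<lambda>u. ?f1 u + ?f2 u) \<in> borel_measurable lborel"
      "(\<lambda>u. indicator I1 u * indicator A u :: ennreal) \<in> borel_measurable lborel"
      "(\<lambda>u. indicator I2 u * indicator A u :: ennreal) \<in> borel_measurable lborel"
      "(\<lambda>u. indicator I3 u * indicator A u :: ennreal) \<in> borel_measurable lborel"
      using I(1,2,3) A
      by (auto intro!: borel_measurable_times_ennreal borel_measurable_add borel_measurable_indicator)
    have "(\<integral>\<^sup>+ u. ?f1 u + ?f2 u + ?f3 u \<partial>lborel) = (\<integral>\<^sup>+ u. ?f1 u + ?f2 u \<partial>lborel) + (\<integral>\<^sup>+ u. ?f3 u \<partial>lborel)"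
      by (rule nn_integral_add[OF m(4) m(3)])
    also have "(\<integral>\<^sup>+ u. ?f1 u + ?f2 u \<partial>lborel) = (\<integral>\<^sup>+ u. ?f1 u \<partial>lborel) + (\<integral>\<^sup>+ u. ?f2 u \<partial>lborel)"
      by (rule nn_integral_add[OF m(1) m(2)])
    also note nn_integral_cmult[OF m(5)]
    also note nn_integral_cmult[OF m(6)]
    also note nn_integral_cmult[OF m(7)]
    finally show ?thesis by (simp only: add.assoc)
  qed
  also have "\<dots> = (\<integral>\<^sup>+ u. indicator ({0..1} \<inter> A) u \<partial>lborel)"
  proof (rule nn_integral_cong_AE)
    show "AE u in lborel. ennreal c1 * (indicator I1 u * indicator A u) + ennreal c2 * (indicator I2 u * indicator A u)
      + ennreal c3 * (indicator I3 u * indicator A u) = indicator ({0..1} \<inter> A) u"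
      using dens
    proof (rule eventually_mono)
      fix u :: real
      assume h: "c1 * indicator I1 u + c2 * indicator I2 u + c3 * indicator I3 u = (indicator {0..1} u :: real)"
      have "ennreal c1 * (indicator I1 u * indicator A u) + ennreal c2 * (indicator I2 u * indicator A u)
      + ennreal c3 * (indicator I3 u * indicator A u) = ennreal ((c1 * indicator I1 u + c2 * indicator I2 u + c3 * indicator I3 u) * indicator A u)"
        using c by (simp add: ennreal_plus[symmetric] ennreal_mult'[symmetric] ennreal_indicator[symmetric] algebra_simps
            split: split_indicator del: ennreal_plus)
      also have "\<dots> = indicator ({0..1} \<inter> A) u"
        unfolding h by (simp split: split_indicator)
      finally show "ennreal c1 * (indicator I1 u * indicator A u) + ennreal c2 * (indicator I2 u * indicator A u)
      + ennreal c3 * (indicator I3 u * indicator A u) = indicator ({0..1} \<inter> A) u" .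
    qed
  qed
  also have "\<dots> = emeasure (uniform_measure lborel {0..1}) A"
    using A by (simp add: divide_ennreal_def)
  finally show "emeasure (distr (uniform_measure lborel {0..1}) lborel G) A = emeasure (uniform_measure lborel {0..1}) A" .
qed



definition seg :: "bool \<Rightarrow> real \<Rightarrow> real \<Rightarrow> real \<Rightarrow> real \<Rightarrow> real \<Rightarrow> real" where
  "seg b l r \<alpha> q t = (if b then l + (r - l) * (t - \<alpha>) / q else r - (r - l) * (t - \<alpha>) / q)"

definition seg3 :: "real \<Rightarrow> real \<Rightarrow> (real \<Rightarrow> real) \<Rightarrow> (real \<Rightarrow> real) \<Rightarrow> (real \<Rightarrow> real) \<Rightarrow> real \<Rightarrow> real" where
  "seg3 p1 p2 f1 f2 f3 t = (if t < p1 then f1 t else if t < p1 + p2 then f2 t else f3 t)"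

lemma piece_seg:
  fixes h :: "real \<Rightarrow> ennreal" and f :: "real \<Rightarrow> real"
  assumes h[measurable]: "h \<in> borel_measurable borel" and q: "0 \<le> q" and lr: "0 < q \<Longrightarrow> l < r"
    and F: "\<And>t. t \<in> {\<alpha>..<\<alpha>+q} \<Longrightarrow> f t = seg b l r \<alpha> q t"
  shows "(\<integral>\<^sup>+ t. indicator {\<alpha>..<\<alpha>+q} t * h (f t) \<partial>lborel)
       = ennreal (q / (r - l)) * (\<integral>\<^sup>+ u. indicator {l..r} u * h u \<partial>lborel)"
proof (cases b)
  case True
  show ?thesis by (rule piece_inc[OF h q lr]) (use F True in \<open>auto simp: seg_def\<close>)
next
  case False
  show ?thesis by (rule piece_dec[OF h q lr]) (use F False in \<open>auto simp: seg_def\<close>)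
qed

lemma meas_seg3: "(\<lambda>t. seg3 p1 p2 (seg b1 l1 r1 a1 q1) (seg b2 l2 r2 a2 q2) (seg b3 l3 r3 a3 q3) t) \<in> borel_measurable borel"
  unfolding seg3_def seg_def by measurable

lemma unif_seg3:
  assumes p: "0 \<le> p1" "0 \<le> p2" "0 \<le> p3" "p1 + p2 + p3 = 1"
    and lr: "0 < p1 \<Longrightarrow> l1 < r1" "0 < p2 \<Longrightarrow> l2 < r2" "0 < p3 \<Longrightarrow> l3 < r3"
    and dens: "AE u in lborel. (p1 / (r1 - l1)) * indicator {l1..r1} u + (p2 / (r2 - l2)) * indicator {l2..r2} u
                + (p3 / (r3 - l3)) * indicator {l3..r3} u = (indicator {0..1} u :: real)"
  shows "distr (uniform_measure lborel {0..1}) lborel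
           (seg3 p1 p2 (seg b1 l1 r1 0 p1) (seg b2 l2 r2 p1 p2) (seg b3 l3 r3 (p1+p2) p3))
         = uniform_measure lborel {0..1}"
proof -
  let ?G = "seg3 p1 p2 (seg b1 l1 r1 0 p1) (seg b2 l2 r2 p1 p2) (seg b3 l3 r3 (p1+p2) p3)"
  have c: "0 \<le> p1 / (r1 - l1)" "0 \<le> p2 / (r2 - l2)" "0 \<le> p3 / (r3 - l3)"
    using p lr by (auto simp: le_less intro!: divide_nonneg_pos)
  show ?thesis
  proof (rule distr3[OF _ p c _ _ _ _ _ _ dens])
    show "?G \<in> borel_measurable borel" using meas_seg3 by simp
    fix h :: "real \<Rightarrow> ennreal" assume h: "h \<in> borel_measurable borel"
    show "(\<integral>\<^sup>+ t. indicator {0..<p1} t * h (?G t) \<partial>lborel) = ennreal (p1 / (r1 - l1)) * (\<integral>\<^sup>+ u. indicator {l1..r1} u * h u \<partial>lborel)"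
      using piece_seg[OF h p(1) lr(1), where f="?G" and \<alpha>=0 and b=b1] by (simp add: seg3_def)
    show "(\<integral>\<^sup>+ t. indicator {p1..<p1+p2} t * h (?G t) \<partial>lborel) = ennreal (p2 / (r2 - l2)) * (\<integral>\<^sup>+ u. indicator {l2..r2} u * h u \<partial>lborel)"
      using piece_seg[OF h p(2) lr(2), where f="?G" and \<alpha>=p1 and b=b2] by (simp add: seg3_def)
    show "(\<integral>\<^sup>+ t. indicator {p1+p2..<p1+p2+p3} t * h (?G t) \<partial>lborel) = ennreal (p3 / (r3 - l3)) * (\<integral>\<^sup>+ u. indicator {l3..r3} u * h u \<partial>lborel)"
      using piece_seg[OF h p(3) lr(3), where f="?G" and \<alpha>="p1+p2" and b=b3] p by (simp add: seg3_def)
  qed auto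
qed

lemma dens_gen:
  fixes \<tau> cl ch cf :: real
  assumes "0 \<le> \<tau>" "\<tau> \<le> 1" "0 < \<tau> \<Longrightarrow> cl + cf = 1" "\<tau> < 1 \<Longrightarrow> ch + cf = 1"
  shows "AE u in lborel. cl * indicator {0..\<tau>} u + ch * indicator {\<tau>..1} u + cf * indicator {0..1} u = (indicator {0..1} u :: real)"
proof -
  have "AE u in lborel. u \<noteq> 0 \<and> u \<noteq> 1 \<and> u \<noteq> \<tau>"
    using AE_lborel_singleton[of 0] AE_lborel_singleton[of 1] AE_lborel_singleton[of \<tau>]
    by eventually_elim auto
  then show ?thesis
  proof (rule eventually_mono)
    fix u :: real assume u: "u \<noteq> 0 \<and> u \<noteq> 1 \<and> u \<noteq> \<tau>"
    show "cl * indicator {0..\<tau>} u + ch * indicator {\<tau>..1} u + cf * indicator {0..1} u = (indicator {0..1} u :: real)"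
    proof (cases "u < 0 \<or> 1 < u")
      case True then show ?thesis using assms by (auto split: split_indicator)
    next
      case False
      then have u01: "0 < u" "u < 1" using u by auto
      show ?thesis
      proof (cases "u < \<tau>")
        case True then show ?thesis using assms u01 by (auto split: split_indicator)
      next
        case False
        then have "\<tau> < u" using u by auto
        then show ?thesis using assms u01 by (auto split: split_indicator)
      qed
    qed
  qed
qed

locale mix =
  fixes x y z :: real
  assumes x: "0 \<le> x" and y: "0 < y" and z: "0 < z"
begin

definition "S = x*y + y*z + z*x"
definition "p1 = x*y/S"
definition "p2 = y*z/S"
definition "p3 = z*x/S"
definition "a = y + z"
definition "b = x + z"
definition "c = x + y"
definition "GX = seg3 p1 p2 (seg False (z/a) 1 0 p1) (seg True 0 1 p1 p2) (seg False 0 (z/a) (p1+p2) p3)"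
definition "GY = seg3 p1 p2 (seg False 0 (x/b) 0 p1) (seg False (x/b) 1 p1 p2) (seg True 0 1 (p1+p2) p3)"
definition "GZ = seg3 p1 p2 (seg True 0 1 0 p1) (seg False 0 (y/c) p1 p2) (seg False (y/c) 1 (p1+p2) p3)"

lemma S0: "0 < S"
proof -
  have "0 < y * z" using y z by simp
  moreover have "0 \<le> x * y" "0 \<le> z * x" using x y z by simp_all
  ultimately show ?thesis unfolding S_def by linarith
qed

lemma abc: "0 < a" "0 < b" "0 < c" using x y z unfolding a_def b_def c_def by auto

lemma p: "0 \<le> p1" "0 \<le> p2" "0 \<le> p3" "p1 + p2 + p3 = 1"
  using x y z S0 unfolding p1_def p2_def p3_def
  by (simp_all add: add_divide_distrib[symmetric]) (simp_all add: S_def)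

lemma p1x: "0 < p1 \<Longrightarrow> 0 < x"
  using x y S0 unfolding p1_def by (cases "x = 0") auto
lemma p3x: "0 < p3 \<Longrightarrow> 0 < x"
  using x z S0 unfolding p3_def by (cases "x = 0") auto

lemma distX: "distr (uniform_measure lborel {0..1}) lborel GX = uniform_measure lborel {0..1}"
  unfolding GX_def
proof (rule unif_seg3[OF p])
  show "z / a < 1" using y z unfolding a_def by simp
  show "0 < (z::real) / a" using z abc by simp
  show "(0::real) < 1" by simp
  have d: "AE u in lborel. (p3 / (z/a - 0)) * indicator {0..z/a} u + (p1 / (1 - z/a)) * indicator {z/a..1} u
        + (p2 / (1 - 0)) * indicator {0..1} u = (indicator {0..1} u :: real)"
  proof (rule dens_gen)
    show "0 \<le> z / a" using z abc by simp
    show "z / a \<le> 1" using y z unfolding a_def by simp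
    show "p3 / (z / a - 0) + p2 / (1 - 0) = 1"
      using y z S0 unfolding p3_def p2_def a_def by (simp add: field_simps) (simp add: S_def algebra_simps)
    show "p1 / (1 - z / a) + p2 / (1 - 0) = 1"
      using y z S0 unfolding p1_def p2_def a_def by (simp add: field_simps) (simp add: S_def algebra_simps)
  qed
  then show "AE u in lborel. p1 / (1 - z / a) * indicator {z / a..1} u + p2 / (1 - 0) * indicator {0..1} u +
                 p3 / (z / a - 0) * indicator {0..z / a} u = (indicator {0..1} u :: real)"
    by (rule eventually_mono) linarith
qed

lemma distY: "distr (uniform_measure lborel {0..1}) lborel GY = uniform_measure lborel {0..1}"
  unfolding GY_def
proof (rule unif_seg3[OF p])
  show "0 < p1 \<Longrightarrow> 0 < x / b" using p1x abc by simp
  show "x / b < 1" using x z unfolding b_def by simp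
  show "(0::real) < 1" by simp
  have d: "AE u in lborel. (p1 / (x/b - 0)) * indicator {0..x/b} u + (p2 / (1 - x/b)) * indicator {x/b..1} u
        + (p3 / (1 - 0)) * indicator {0..1} u = (indicator {0..1} u :: real)"
  proof (rule dens_gen)
    show "0 \<le> x / b" using x abc by simp
    show "x / b \<le> 1" using x z unfolding b_def by simp
    assume "0 < x / b"
    then have "0 < x" using abc by (simp add: zero_less_divide_iff)
    then show "p1 / (x / b - 0) + p3 / (1 - 0) = 1"
      using y z S0 unfolding p1_def p3_def b_def by (simp add: field_simps) (simp add: S_def algebra_simps)
  next
    show "p2 / (1 - x / b) + p3 / (1 - 0) = 1"
      using x y z S0 unfolding p2_def p3_def b_def by (simp add: field_simps) (simp add: S_def algebra_simps)
  qed
  then show "AE u in lborel. p1 / (x / b - 0) * indicator {0..x / b} u + p2 / (1 - x / b) * indicator {x / b..1} u +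
                 p3 / (1 - 0) * indicator {0..1} u = (indicator {0..1} u :: real)"
    by (rule eventually_mono) linarith
qed

lemma distZ: "distr (uniform_measure lborel {0..1}) lborel GZ = uniform_measure lborel {0..1}"
  unfolding GZ_def
proof (rule unif_seg3[OF p])
  show "(0::real) < 1" by simp
  show "0 < (y::real) / c" using y abc by simp
  show "0 < p3 \<Longrightarrow> y / c < 1" using p3x y unfolding c_def by simp
  have d: "AE u in lborel. (p2 / (y/c - 0)) * indicator {0..y/c} u + (p3 / (1 - y/c)) * indicator {y/c..1} u
        + (p1 / (1 - 0)) * indicator {0..1} u = (indicator {0..1} u :: real)"
  proof (rule dens_gen)
    show "0 \<le> y / c" using y abc by simp
    show "y / c \<le> 1" using x y unfolding c_def by simp
    show "p2 / (y / c - 0) + p1 / (1 - 0) = 1"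
      using x y z S0 unfolding p1_def p2_def c_def by (simp add: field_simps) (simp add: S_def algebra_simps)
  next
    assume "y / c < 1"
    then have "0 < x" using y x unfolding c_def by (cases "x = 0") auto
    then show "p3 / (1 - y / c) + p1 / (1 - 0) = 1"
      using y z S0 unfolding p1_def p3_def c_def by (simp add: field_simps) (simp add: S_def algebra_simps)
  qed
  then show "AE u in lborel. p1 / (1 - 0) * indicator {0..1} u + p2 / (y / c - 0) * indicator {0..y / c} u +
                 p3 / (1 - y / c) * indicator {y / c..1} u = (indicator {0..1} u :: real)"
    by (rule eventually_mono) linarith
qed

lemma sumXYZ:
  assumes t: "0 \<le> t" "t < 1"
  shows "a * GX t + b * GY t + c * GZ t = x + y + z"
proof -
  have ab: "a \<noteq> 0" "b \<noteq> 0" "c \<noteq> 0" using abc by auto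
  consider "t < p1" | "p1 \<le> t" "t < p1 + p2" | "p1 + p2 \<le> t" by linarith
  then show ?thesis
  proof cases
    case 1
    then have "p1 \<noteq> 0" using t by auto
    then show ?thesis using 1 ab unfolding GX_def GY_def GZ_def seg3_def seg_def
      by (simp add: field_simps) (simp add: a_def b_def c_def algebra_simps)
  next
    case 2
    then have "p2 \<noteq> 0" by auto
    then show ?thesis using 2 ab unfolding GX_def GY_def GZ_def seg3_def seg_def
      by (simp add: field_simps) (simp add: a_def b_def c_def algebra_simps)
  next
    case 3
    then have "p3 \<noteq> 0" using t p by auto
    moreover have "\<not> t < p1" "\<not> t < p1 + p2" using 3 p by auto
    ultimately show ?thesis using ab unfolding GX_def GY_def GZ_def seg3_def seg_def
      by (simp add: field_simps) (simp add: a_def b_def c_def algebra_simps)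
  qed
qed

end



abbreviation "M0 \<equiv> uniform_measure lborel {0..1::real}"

lemma M0_prob: "prob_space M0"
  by (rule prob_space_uniform_measure) simp_all

lemma meas_M0: "f \<in> borel_measurable borel \<Longrightarrow> f \<in> borel_measurable M0"
  by (simp add: measurable_def)

lemma CM_from_pw:
  assumes UM: "unif_marginals M0 d U"
    and pw: "\<And>t. 0 \<le> t \<Longrightarrow> t < 1 \<Longrightarrow> (\<Sum>i<d. a i * (U i t - 1/2)) = 0"
  shows "is_CM M0 d a U"
proof -
  have "AE t in M0. (\<Sum>i<d. a i * (U i t - 1/2)) = 0"
  proof (rule AE_uniform_measureI)
    show "{0..1::real} \<in> sets lborel" by simp
    show "AE t in lborel. t \<in> {0..1} \<longrightarrow> (\<Sum>i<d. a i * (U i t - 1/2)) = 0"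
      using AE_lborel_singleton[of 1] by (rule eventually_mono) (use pw in auto)
  qed
  then show ?thesis using CM_iff[OF M0_prob UM] by simp
qed

definition "Gid = seg3 1 0 (seg True 0 1 0 1) (seg True 0 1 1 0) (seg True 0 1 (1+0) 0)"
definition "Gneg = seg3 1 0 (seg False 0 1 0 1) (seg True 0 1 1 0) (seg True 0 1 (1+0) 0)"

lemma Gid: "distr M0 lborel Gid = M0" "Gid \<in> borel_measurable M0" "0 \<le> t \<Longrightarrow> t < 1 \<Longrightarrow> Gid t = t"
proof -
  show "distr M0 lborel Gid = M0" unfolding Gid_def
    by (rule unif_seg3) (simp_all add: indicator_def)
  show "Gid \<in> borel_measurable M0" unfolding Gid_def by (rule meas_M0 meas_seg3)+
  show "0 \<le> t \<Longrightarrow> t < 1 \<Longrightarrow> Gid t = t" by (simp add: Gid_def seg3_def seg_def)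
qed

lemma Gneg: "distr M0 lborel Gneg = M0" "Gneg \<in> borel_measurable M0" "0 \<le> t \<Longrightarrow> t < 1 \<Longrightarrow> Gneg t = 1 - t"
proof -
  show "distr M0 lborel Gneg = M0" unfolding Gneg_def
    by (rule unif_seg3) (simp_all add: indicator_def)
  show "Gneg \<in> borel_measurable M0" unfolding Gneg_def by (rule meas_M0 meas_seg3)+
  show "0 \<le> t \<Longrightarrow> t < 1 \<Longrightarrow> Gneg t = 1 - t" by (simp add: Gneg_def seg3_def seg_def)
qed

lemma pair_le:
  fixes w :: "nat \<Rightarrow> real"
  assumes pos: "\<forall>i<d. w i > 0" and i: "i < d" and m: "m < d" and im: "i \<noteq> m"
  shows "w i + w m \<le> (\<Sum>i<d. w i)"
proof -
  have "(\<Sum>k\<in>{i,m}. w k) \<le> (\<Sum>k\<in>{..<d}. w k)"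
    by (rule sum_mono2) (use i m pos in \<open>auto simp: less_imp_le\<close>)
  then show ?thesis using im by simp
qed

lemma existsA:
  fixes w :: "nat \<Rightarrow> real"
  assumes pos: "\<forall>i<d. w i > 0" and m: "m < d" and big: "(\<Sum>i<d. w i) \<le> 2 * w m"
  shows "\<exists>U. unif_marginals M0 d U \<and> is_CM M0 d (wstar d w) U"
proof -
  define s where "s = (\<Sum>i<d. w i)"
  define U where "U i = (if i = m then Gid else Gneg)" for i :: nat
  have UM: "unif_marginals M0 d U"
    unfolding unif_marginals_def U_def using Gid Gneg by auto
  define ws where "ws = wstar d w"
  have wsm: "ws m = s - w m"
    unfolding ws_def wstar_def wsum_def s_def[symmetric] using big s_def by auto
  have wsi: "\<And>i. i < d \<Longrightarrow> i \<noteq> m \<Longrightarrow> ws i = w i"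
  proof -
    fix i assume i: "i < d" and im: "i \<noteq> m"
    have "w i + w m \<le> s" using pair_le[OF pos i m im] s_def by simp
    then have "2 * w i \<le> s" using big s_def by linarith
    then show "ws i = w i" unfolding ws_def wstar_def wsum_def s_def[symmetric] by simp
  qed
  have "is_CM M0 d ws U"
  proof (rule CM_from_pw[OF UM])
    fix t :: real assume t: "0 \<le> t" "t < 1"
    have "(\<Sum>i<d. ws i * (U i t - 1/2)) = ws m * (U m t - 1/2) + (\<Sum>i\<in>{..<d}-{m}. ws i * (U i t - 1/2))"
      using m by (subst sum.remove[of _ m]) auto
    also have "(\<Sum>i\<in>{..<d}-{m}. ws i * (U i t - 1/2)) = (\<Sum>i\<in>{..<d}-{m}. w i * (1/2 - t))"
      by (rule sum.cong) (use wsi Gneg(3)[OF t] in \<open>auto simp: U_def\<close>)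
    also have "\<dots> = (s - w m) * (1/2 - t)"
    proof -
      have "(\<Sum>i\<in>{..<d}-{m}. w i) = s - w m"
        unfolding s_def using m by (subst sum.remove[of _ m]) auto
      then show ?thesis by (simp only: sum_distrib_right[symmetric])
    qed
    finally show "(\<Sum>i<d. ws i * (U i t - 1/2)) = 0"
      using wsm Gid(3)[OF t] by (simp add: U_def algebra_simps)
  qed
  then show ?thesis using UM unfolding ws_def by blast
qed

lemma CM_cong:
  assumes h: "\<And>i. i < d \<Longrightarrow> a i = b i"
  shows "is_CM M d a U = is_CM M d b U"
proof -
  have e1: "\<And>x. (\<Sum>i<d. a i * U i x) = (\<Sum>i<d. b i * U i x)" by (rule sum.cong) (auto simp: h)
  have e2: "(\<Sum>i<d. a i) = (\<Sum>i<d. b i)" by (rule sum.cong) (auto simp: h)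
  show ?thesis by (simp only: is_CM_def e1 e2)
qed

lemma existsB:
  fixes w :: "nat \<Rightarrow> real"
  assumes pos: "\<forall>i<d. w i > 0" and d2: "2 \<le> d" and small: "\<forall>i<d. 2 * w i < (\<Sum>i<d. w i)"
  shows "\<exists>U. unif_marginals M0 d U \<and> is_CM M0 d (wstar d w) U"
proof -
  define s where "s = (\<Sum>i<d. w i)"
  define P where "P n = (\<Sum>i<n. w i)" for n
  have Pd: "P d = s" unfolding P_def s_def ..
  have s0: "0 < s"
  proof -
    have "0 < w 0" using pos d2 by simp
    moreover have "2 * w 0 < s" using small d2 s_def by simp
    ultimately show ?thesis by simp
  qed
  define k where "k = (LEAST n. s/2 < P n)"
  have ex: "s/2 < P d" using Pd s0 by simp
  have Pk: "s/2 < P k" unfolding k_def by (rule LeastI[of _ d]) (rule ex)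
  have kd: "k \<le> d" unfolding k_def by (rule Least_le) (rule ex)
  have k0: "k \<noteq> 0"
  proof
    assume "k = 0" then show False using Pk s0 unfolding P_def by simp
  qed
  then obtain j where kj: "k = Suc j" by (cases k) auto
  have Pj: "\<not> s/2 < P j"
    using not_less_Least[of j "\<lambda>n. s/2 < P n"] kj unfolding k_def[symmetric] by simp
  have PS: "P (Suc j) = P j + w j" unfolding P_def by simp
  have jd: "j < d" using kd kj by simp
  have jd1: "Suc j < d"
  proof (rule ccontr)
    assume "\<not> Suc j < d"
    then have "Suc j = d" using kd kj by simp
    then have "w j = s - P j" using PS Pd by simp
    moreover have "2 * w j < s" using small jd s_def by auto
    ultimately show False using Pj by simp
  qed
  define x where "x = s/2 - P j"
  define y where "y = s/2 - w j"
  define z where "z = P (Suc j) - s/2"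
  have x: "0 \<le> x" using Pj unfolding x_def by simp
  have y: "0 < y" using small jd unfolding y_def s_def by auto
  have z: "0 < z" using Pk kj unfolding z_def by simp
  have mx: "mix x y z" using x y z by unfold_locales
  interpret mix x y z by (rule mx)
  have ea: "a = P j" using PS by (simp only: mix.a_def[OF mx]) (simp add: y_def z_def)
  have eb: "b = w j" using PS by (simp only: mix.b_def[OF mx]) (simp add: x_def z_def)
  have ec: "c = s - P (Suc j)" using PS by (simp only: mix.c_def[OF mx]) (simp add: x_def y_def)
  define U where "U i = (if i < j then GX else if i = j then GY else GZ)" for i :: nat
  have mX: "GX \<in> borel_measurable M0" unfolding GX_def by (rule meas_M0 meas_seg3)+
  have mY: "GY \<in> borel_measurable M0" unfolding GY_def by (rule meas_M0 meas_seg3)+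
  have mZ: "GZ \<in> borel_measurable M0" unfolding GZ_def by (rule meas_M0 meas_seg3)+
  have UM: "unif_marginals M0 d U"
    unfolding unif_marginals_def U_def using distX distY distZ mX mY mZ by auto
  have split: "\<And>f :: nat \<Rightarrow> real. (\<Sum>i<d. f i) = (\<Sum>i<j. f i) + f j + (\<Sum>i\<in>{Suc j..<d}. f i)"
  proof -
    fix f :: "nat \<Rightarrow> real"
    have eq: "{..<d} = {..<Suc j} \<union> {Suc j..<d}" using jd1 by auto
    have "(\<Sum>i<d. f i) = sum f ({..<Suc j} \<union> {Suc j..<d})" by (subst eq) (rule refl)
    also have "\<dots> = sum f {..<Suc j} + sum f {Suc j..<d}" by (rule sum.union_disjoint) auto
    finally have "(\<Sum>i<d. f i) = (\<Sum>i<Suc j. f i) + (\<Sum>i\<in>{Suc j..<d}. f i)" .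
    then show "(\<Sum>i<d. f i) = (\<Sum>i<j. f i) + f j + (\<Sum>i\<in>{Suc j..<d}. f i)" by simp
  qed
  have rest: "(\<Sum>i\<in>{Suc j..<d}. w i) = s - P (Suc j)"
    using split[of w] PS unfolding s_def P_def by simp
  have "is_CM M0 d w U"
  proof (rule CM_from_pw[OF UM])
    fix t :: real assume t: "0 \<le> t" "t < 1"
    have "(\<Sum>i<d. w i * U i t) = (\<Sum>i<j. w i * U i t) + w j * U j t + (\<Sum>i\<in>{Suc j..<d}. w i * U i t)"
      by (rule split)
    also have "(\<Sum>i<j. w i * U i t) = (\<Sum>i<j. w i * GX t)"
      by (rule sum.cong) (auto simp: U_def)
    also have "(\<Sum>i\<in>{Suc j..<d}. w i * U i t) = (\<Sum>i\<in>{Suc j..<d}. w i * GZ t)"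
      by (rule sum.cong) (auto simp: U_def)
    also have "(\<Sum>i<j. w i * GX t) + w j * U j t + (\<Sum>i\<in>{Suc j..<d}. w i * GZ t)
        = a * GX t + b * GY t + c * GZ t"
    proof -
      have h1: "(\<Sum>i<j. w i * GX t) = P j * GX t" unfolding P_def by (simp add: sum_distrib_right)
      have h2: "(\<Sum>i\<in>{Suc j..<d}. w i * GZ t) = (s - P (Suc j)) * GZ t"
        unfolding rest[symmetric] by (simp add: sum_distrib_right)
      show ?thesis unfolding h1 h2 ea eb ec by (simp add: U_def)
    qed
    also have "\<dots> = x + y + z" by (rule sumXYZ[OF t])
    also have "\<dots> = s / 2" unfolding x_def y_def z_def using PS by simp
    finally have e: "(\<Sum>i<d. w i * U i t) = s / 2" .
    have "(\<Sum>i<d. w i * (U i t - 1/2)) = (\<Sum>i<d. w i * U i t) - s / 2"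
      unfolding s_def by (simp add: right_diff_distrib sum_subtractf sum_divide_distrib)
    then show "(\<Sum>i<d. w i * (U i t - 1/2)) = 0" using e by simp
  qed
  moreover have "is_CM M0 d (wstar d w) U = is_CM M0 d w U"
    by (rule CM_cong) (use small in \<open>auto simp: wstar_def wsum_def less_imp_le\<close>)
  ultimately show ?thesis using UM by blast
qed



lemma partA:
  fixes w :: "nat \<Rightarrow> real" and M :: "'a measure"
  assumes d2: "2 \<le> d" and pos: "\<forall>i<d. w i > 0" and P: "prob_space M" and UM: "unif_marginals M d U"
  shows "lfun d w \<le> var_sum M d w U \<and>
         var_sum M d w U \<le> (1/12) * (\<Sum>i<d. w i)^2 \<and>
         (var_sum M d w U = lfun d w \<longleftrightarrow> is_CM M d (wstar d w) U) \<and>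
         (var_sum M d w U = (1/12) * (\<Sum>i<d. w i)^2 \<longleftrightarrow> comonotonic M d U)"
proof -
  have d0: "0 < d" using d2 by simp
  show ?thesis using lower[OF P UM pos d2] upper[OF P UM pos d0] by simp
qed

lemma existence:
  fixes w :: "nat \<Rightarrow> real"
  assumes d2: "2 \<le> d" and pos: "\<forall>i<d. w i > 0"
  shows "\<exists>(M :: real measure) U. prob_space M \<and> unif_marginals M d U \<and> var_sum M d w U = lfun d w"
proof -
  have "\<exists>U. unif_marginals M0 d U \<and> is_CM M0 d (wstar d w) U"
  proof (cases "\<exists>m<d. (\<Sum>i<d. w i) \<le> 2 * w m")
    case True
    then obtain m where "m < d" "(\<Sum>i<d. w i) \<le> 2 * w m" by auto
    then show ?thesis by (rule existsA[OF pos])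
  next
    case False
    then have "\<forall>i<d. 2 * w i < (\<Sum>i<d. w i)" by (auto simp: not_le)
    then show ?thesis by (rule existsB[OF pos d2])
  qed
  then obtain U where UM: "unif_marginals M0 d U" and CM: "is_CM M0 d (wstar d w) U" by blast
  have "var_sum M0 d w U = lfun d w"
    using lower(2)[OF M0_prob UM pos d2] CM by simp
  then show ?thesis using M0_prob UM by blast
qed

theorem mainTheorem11:
  fixes d :: nat and w :: "nat \<Rightarrow> real"
  assumes "d \<ge> 2" and "\<forall>i<d. w i > 0"
  shows "(\<forall>(M :: 'a measure) U. prob_space M \<and> unif_marginals M d U \<longrightarrow>
            lfun d w \<le> var_sum M d w U \<and>
            var_sum M d w U \<le> (1/12) * (\<Sum>i<d. w i)^2 \<and>
            (var_sum M d w U = lfun d w \<longleftrightarrow> is_CM M d (wstar d w) U) \<and>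
            (var_sum M d w U = (1/12) * (\<Sum>i<d. w i)^2 \<longleftrightarrow> comonotonic M d U))
       \<and> (INF p \<in> {(M :: real measure, U). prob_space M \<and> unif_marginals M d U}.
             var_sum (fst p) d w (snd p)) = lfun d w
       \<and> (\<exists>(M :: real measure) U. prob_space M \<and> unif_marginals M d U \<and>
             var_sum M d w U = lfun d w)"
proof (intro conjI allI impI)
  fix M :: "'a measure" and U
  assume h: "prob_space M \<and> unif_marginals M d U"
  note pa = partA[OF assms(1,2) conjunct1[OF h] conjunct2[OF h]]
  show "lfun d w \<le> var_sum M d w U" using pa by blast
  show "var_sum M d w U \<le> (1/12) * (\<Sum>i<d. w i)^2" using pa by blast
  show "var_sum M d w U = lfun d w \<longleftrightarrow> is_CM M d (wstar d w) U" using pa by blast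
  show "var_sum M d w U = (1/12) * (\<Sum>i<d. w i)^2 \<longleftrightarrow> comonotonic M d U" using pa by blast
next
  show ex: "\<exists>(M :: real measure) U. prob_space M \<and> unif_marginals M d U \<and> var_sum M d w U = lfun d w"
    by (rule existence[OF assms])
  show "(INF p \<in> {(M :: real measure, U). prob_space M \<and> unif_marginals M d U}.
             var_sum (fst p) d w (snd p)) = lfun d w"
  proof (rule cInf_eq_minimum)
    from ex obtain M :: "real measure" and U where "prob_space M" "unif_marginals M d U" "var_sum M d w U = lfun d w"
      by blast
    then show "lfun d w \<in> (\<lambda>p. var_sum (fst p) d w (snd p)) ` {(M :: real measure, U). prob_space M \<and> unif_marginals M d U}"
      by (intro image_eqI[where x="(M, U)"]) auto
  next
    fix v assume "v \<in> (\<lambda>p. var_sum (fst p) d w (snd p)) ` {(M :: real measure, U). prob_space M \<and> unif_marginals M d U}"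
    then obtain M :: "real measure" and U where "prob_space M" "unif_marginals M d U" "v = var_sum M d w U"
      by auto
    then show "lfun d w \<le> v" using partA[OF assms] by blast
  qed
qed

end
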